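(* Let $\mathcal P$ be a finite collection of prototiles. If the tiling system $\sigma:T(\mathcal P)\to T(\mathcal P)$ has a point of period $2$ (a point $x$ with $\sigma^2x=x\ne\sigma x$), then it has at least two fixed points.
   Context: A prototile is a finite nonempty subset of $\mathbb Z$ with minimum $0$. For a finite collection $\mathcal P=\{P_1,\dots,P_K\}$ of prototiles, a tiling of $\mathbb Z$ by $\mathcal P$ is an expression $\mathbb Z=\bigcup_j(t_j+P_{k_j})$ as a disjoint union of translates of prototiles; it corresponds to the point $x\in\{1,\dots,K\}^{\mathbb Z}$ with $x_i=k$ iff $i\in t_j+P_{k_j}$ for some $j$ with $k_j=k$. $T(\mathcal P)$ is the set of all such points and $\sigma$ is the shift $(\sigma x)_i=x_{i+1}$; $\sigma:T(\mathcal P)\to T(\mathcal P)$ is called a tiling system. *)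

theory Defs
  imports Main
begin

definition prototile :: "int set \<Rightarrow> bool" where
  "prototile A \<longleftrightarrow> finite A \<and> A \<noteq> {} \<and> Min A = 0"

definition translate :: "int \<Rightarrow> int set \<Rightarrow> int set" where
  "translate t A = (\<lambda>s. t + s) ` A"

text \<open>The collection of prototiles is given as P 1, ..., P K.
  A tiling is a set Tl of placed tiles (t, k), meaning the translate t + P k,
  such that every integer lies in exactly one placed tile (disjoint cover of Z).
  The associated point x : Z -> {1..K} labels each integer by the index of
  the prototile of the tile containing it.\<close>
definition tiling_points :: "nat \<Rightarrow> (nat \<Rightarrow> int set) \<Rightarrow> (int \<Rightarrow> nat) set" where
  "tiling_points K P = {x. \<exists>Tl. (\<forall>p\<in>Tl. snd p \<in> {1..K}) \<and>
      (\<forall>i::int. \<exists>!p. p \<in> Tl \<and> i \<in> translate (fst p) (P (snd p))) \<and>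
      (\<forall>i::int. \<forall>p\<in>Tl. i \<in> translate (fst p) (P (snd p)) \<longrightarrow> x i = snd p)}"

definition shift :: "(int \<Rightarrow> nat) \<Rightarrow> (int \<Rightarrow> nat)" where
  "shift x = (\<lambda>i. x (i + 1))"

end

theory Submission
  imports Defs
begin

lemma per_mod2:
  fixes x :: "int \<Rightarrow> nat"
  assumes h: "\<forall>i. x (i + 2) = x i"
  shows "x i = x (i mod 2)"
proof -
  have "\<forall>r. x (r + 2 * n) = x r" for n :: int
  proof (induct n rule: int_induct[where k=0])
    case base then show ?case by simp
  next
    case (step1 i) then show ?case using h
      by (metis add.assoc distrib_left mult.comm_neutral)
  next
    case (step2 i)
    show ?case
    proof
      fix r
      have "x (r + 2 * (i - 1) + 2) = x (r + 2 * (i - 1))" using h by blast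
      moreover have "r + 2 * (i - 1) + 2 = r + 2 * i" by simp
      ultimately show "x (r + 2 * (i - 1)) = x r" using step2 by metis
    qed
  qed
  then have "x (i mod 2 + 2 * (i div 2)) = x (i mod 2)" by blast
  moreover have "i mod 2 + 2 * (i div 2) = i" by simp
  ultimately show ?thesis by simp
qed

lemma const_tiling:
  fixes x :: "int \<Rightarrow> nat"
  assumes xT: "x \<in> tiling_points K P"
    and H: "\<forall>i j. x i = x j \<longleftrightarrow> i mod 2 = j mod 2"
  shows "(\<lambda>_. x c) \<in> tiling_points K P"
proof -
  define k where "k = x c"
  obtain Tl where T1: "\<forall>p\<in>Tl. snd p \<in> {1..K}"
    and T2: "\<forall>i::int. \<exists>!p. p \<in> Tl \<and> i \<in> translate (fst p) (P (snd p))"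
    and T3: "\<forall>i::int. \<forall>p\<in>Tl. i \<in> translate (fst p) (P (snd p)) \<longrightarrow> x i = snd p"
    using xT unfolding tiling_points_def by blast
  have par: "(t + q) mod 2 = c mod 2" if "(t, k) \<in> Tl" "q \<in> P k" for t q
  proof -
    have "t + q \<in> translate t (P k)" using that unfolding translate_def by blast
    then have "x (t + q) = k" using T3 that by fastforce
    then show ?thesis using H k_def by metis
  qed
  define Tl' where "Tl' = {(t + d, k) | t d. (t, k) \<in> Tl \<and> (d = 0 \<or> d = 1)}"
  have A: "\<forall>p\<in>Tl'. snd p \<in> {1..K}" unfolding Tl'_def using T1 by force
  have B: "\<exists>!p. p \<in> Tl' \<and> i \<in> translate (fst p) (P (snd p))" for i
  proof -
    define d where "d = (i - c) mod 2"
    have d01: "d = 0 \<or> d = 1" unfolding d_def by auto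
    define j where "j = i - d"
    have jc: "j mod 2 = c mod 2" unfolding j_def d_def by presburger
    obtain p where p: "p \<in> Tl" "j \<in> translate (fst p) (P (snd p))" using T2 by blast
    have "x j = snd p" using T3 p by blast
    then have sp: "snd p = k" using H jc k_def by metis
    have ex: "(fst p + d, k) \<in> Tl' \<and> i \<in> translate (fst (fst p + d, k)) (P (snd (fst p + d, k)))"
    proof
      have "(fst p, k) \<in> Tl" using p(1) sp by (metis prod.collapse)
      then show "(fst p + d, k) \<in> Tl'" unfolding Tl'_def using d01 by blast
      from p(2) sp obtain q where q: "q \<in> P k" "j = fst p + q"
        unfolding translate_def by blast
      have "i = fst p + d + q" using q(2) j_def by simp
      then show "i \<in> translate (fst (fst p + d, k)) (P (snd (fst p + d, k)))"
        unfolding translate_def using q(1) by (simp add: image_eqI)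
    qed
    have un: "pa = (fst p + d, k)" if pa1: "pa \<in> Tl'" and pa2: "i \<in> translate (fst pa) (P (snd pa))" for pa
    proof -
      have "\<exists>t1 d1. pa = (t1 + d1, k) \<and> (t1, k) \<in> Tl \<and> (d1 = 0 \<or> d1 = 1)"
        using pa1 unfolding Tl'_def by auto
      then obtain t1 d1 where t1: "pa = (t1 + d1, k)" "(t1, k) \<in> Tl" "d1 = 0 \<or> d1 = 1"
        by blast
      obtain q where q: "q \<in> P k" "i = t1 + d1 + q"
        using pa2 t1 unfolding translate_def by auto
      have tq: "(t1 + q) mod 2 = c mod 2" using par t1 q by blast
      have "d1 = d" unfolding d_def using tq t1(3) q(2) by presburger
      then have "j = t1 + q" using q(2) j_def by simp
      then have "j \<in> translate (fst (t1, k)) (P (snd (t1, k)))"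
        using q(1) unfolding translate_def by (simp add: image_eqI)
      then have "(t1, k) = p" using T2 p t1(2) by blast
      then show ?thesis using t1 \<open>d1 = d\<close> by auto
    qed
    show ?thesis using ex un by blast
  qed
  have C: "\<forall>p\<in>Tl'. snd p = k" unfolding Tl'_def by auto
  show ?thesis unfolding tiling_points_def k_def[symmetric]
  proof (intro CollectI exI[of _ Tl'] conjI)
    show "\<forall>p\<in>Tl'. snd p \<in> {1..K}" by (rule A)
    show "\<forall>i. \<exists>!p. p \<in> Tl' \<and> i \<in> translate (fst p) (P (snd p))" using B by blast
    show "\<forall>i. \<forall>p\<in>Tl'. i \<in> translate (fst p) (P (snd p)) \<longrightarrow> k = snd p" using C by simp
  qed
qed

theorem mainTheorem5:
  fixes K :: nat and P :: "nat \<Rightarrow> int set" and x :: "int \<Rightarrow> nat"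
  assumes protos: "\<forall>k\<in>{1..K}. prototile (P k)"
    and xT: "x \<in> tiling_points K P"
    and per2: "shift (shift x) = x"
    and notfix: "shift x \<noteq> x"
  shows "\<exists>y z. y \<in> tiling_points K P \<and> z \<in> tiling_points K P \<and> y \<noteq> z
           \<and> shift y = y \<and> shift z = z"
proof -
  have h: "\<forall>i. x (i + 2) = x i"
  proof
    fix i
    have "shift (shift x) i = x i" using per2 by simp
    then show "x (i + 2) = x i" unfolding shift_def by (simp add: add.assoc)
  qed
  have m: "x i = x (i mod 2)" for i using per_mod2[OF h] .
  have ne: "x 0 \<noteq> x 1"
  proof
    assume e: "x 0 = x 1"
    have "x i = x 0" for i
      using m[of i] e by (metis mod_pos_pos_trivial not_mod_2_eq_1_eq_0 zero_less_one)
    then have "shift x = x" unfolding shift_def by (metis ext)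
    with notfix show False by simp
  qed
  have H: "\<forall>i j. x i = x j \<longleftrightarrow> i mod 2 = j mod 2"
  proof (intro allI)
    fix i j :: int
    have "i mod 2 = 0 \<or> i mod 2 = 1" "j mod 2 = 0 \<or> j mod 2 = 1" by auto
    then show "x i = x j \<longleftrightarrow> i mod 2 = j mod 2"
      using m[of i] m[of j] ne by auto
  qed
  show ?thesis
  proof (intro exI conjI)
    show "(\<lambda>_. x 0) \<in> tiling_points K P" by (rule const_tiling[OF xT H])
    show "(\<lambda>_. x 1) \<in> tiling_points K P" by (rule const_tiling[OF xT H])
    show "(\<lambda>_. x 0) \<noteq> (\<lambda>_. x 1)" using ne by meson
    show "shift (\<lambda>_. x 0) = (\<lambda>_. x 0)" unfolding shift_def by simp
    show "shift (\<lambda>_. x 1) = (\<lambda>_. x 1)" unfolding shift_def by simp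
  qed
qed

end
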